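(* Let $Z_p^{prim}(f)=\frac{C^R}{B_p}\sum_{j=1}^{B_p}\mathcal{L}(y_jf^Tx_j)+\rho R(f)-\eta\sum_{i\in\mathcal{N}_p}\Big(\big(f-\tfrac12(f_p(t)+f_i(t))\big)^T\epsilon^{pi}+\tfrac14\|\epsilon^{pi}\|^2\Big)$ for arbitrary vectors $f_p(t),f_i(t),\epsilon^{pi}\in\mathbb{R}^d$ (possibly random), and let $f^*_p=\arg\min_fZ_p^{prim}(f)$. Assume $R$ is twice differentiable with $\|\nabla^2R(f)\|\le\tau$ (operator norm) for all $f$, and that $\mathcal{L}'$ is continuous with $|\mathcal{L}'(a)-\mathcal{L}'(b)|\le c_4|a-b|$ for all $a,b$. Let $\alpha>0$ and let $\xi\in\mathbb{R}^d$ be a random vector with density proportional to $e^{-\zeta\|\xi\|}$, $\zeta=\frac{\rho B_p\alpha}{2C^R}$, and set $V^*_p=f^*_p+\xi$. Then for every $\delta\in(0,1)$, $$\mathbb{P}\Big(Z^{prim}_p(V^*_p)\le Z^{prim}_p(f^*_p)+\frac{4(C^R)^2d^2(\rho\tau+c_4C^R)\big(\ln(d/\delta)\big)^2}{\rho^2B_p^2\alpha^2}\Big)\ge1-\delta.$$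
   Context: $d,B_p\ge1$ integers, $C^R>0$, $\rho>0$, $\eta>0$, $\mathcal{N}_p$ a finite index set. The dataset $((x_j,y_j))_{j=1}^{B_p}$ is fixed with $\|x_j\|\le1$, $y_j\in\{-1,1\}$. The loss $\mathcal{L}:\mathbb{R}\to\mathbb{R}$ is convex and differentiable with $|\mathcal{L}'|\le1$; $R$ is 1-strongly convex. $\|\cdot\|$ is the Euclidean norm. *)

theory Defs
  imports "HOL-Analysis.Analysis"
begin

definition strongly_convex :: "real \<Rightarrow> ('a::real_normed_vector \<Rightarrow> real) \<Rightarrow> bool" where
  "strongly_convex \<mu> R \<longleftrightarrow>
     (\<forall>x y t. 0 \<le> t \<and> t \<le> 1 \<longrightarrow>
        R (t *\<^sub>R x + (1 - t) *\<^sub>R y)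
          \<le> t * R x + (1 - t) * R y - \<mu> / 2 * t * (1 - t) * (norm (x - y))\<^sup>2)"

definition norm_laplace :: "real \<Rightarrow> 'a::euclidean_space measure" where
  "norm_laplace \<zeta> = density lborel
     (\<lambda>\<xi>. ennreal (exp (- \<zeta> * norm \<xi>) / (\<integral>z. exp (- \<zeta> * norm (z::'a)) \<partial>lborel)))"

definition Zprim :: "real \<Rightarrow> nat \<Rightarrow> (real \<Rightarrow> real) \<Rightarrow> (nat \<Rightarrow> 'a::euclidean_space)
    \<Rightarrow> (nat \<Rightarrow> real) \<Rightarrow> real \<Rightarrow> ('a \<Rightarrow> real) \<Rightarrow> real \<Rightarrow> 'i set \<Rightarrow> 'a \<Rightarrow> ('i \<Rightarrow> 'a)
    \<Rightarrow> ('i \<Rightarrow> 'a) \<Rightarrow> 'a \<Rightarrow> real" where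
  "Zprim CR B L x y \<rho> R \<eta> N fp fi \<epsilon> f =
     CR / real B * (\<Sum>j = 1..B. L (y j * (f \<bullet> x j))) + \<rho> * R f
     - \<eta> * (\<Sum>i\<in>N. (f - (1/2) *\<^sub>R (fp + fi i)) \<bullet> \<epsilon> i + (1/4) * (norm (\<epsilon> i))\<^sup>2)"

end

theory Submission
  imports Defs "HOL-Real_Asymp.Real_Asymp" "HOL-Probability.Probability_Measure"
begin


lemma DERIV_Erl: fixes x :: real shows
  "DERIV (\<lambda>x. - (\<Sum>n\<le>k. (x^n * exp (-x)) / fact n)) x :> x^k * exp (-x) / fact k"
proof(induction k)
  case 0 show ?case by (auto intro!: derivative_eq_intros)
next
  case (Suc k)
  have "DERIV (\<lambda>x. - (\<Sum>n\<le>k. (x^n * exp (-x)) / fact n) - (x^Suc k * exp (-x)) / fact (Suc k)) x :>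
    x^k * exp (-x) / fact k - ((real (Suc k) - x) * x ^ k * exp (- x)) / (fact (Suc k))"
    by (intro DERIV_diff Suc)
       (auto intro!: derivative_eq_intros simp del: fact_Suc power_Suc
             simp add: field_simps power_Suc[symmetric])
  also have "(\<lambda>x. - (\<Sum>n\<le>k. (x^n * exp (-x)) / fact n) - (x^Suc k * exp (-x)) / fact (Suc k))
     = (\<lambda>x. - (\<Sum>n\<le>Suc k. (x^n * exp (-x)) / fact n))"
    by simp
  also have "x^k * exp (-x) / fact k - ((real (Suc k) - x) * x ^ k * exp (- x)) / (fact (Suc k)) = x^Suc k * exp (-x) / fact (Suc k)"
    by (auto simp: field_simps simp del: fact_Suc)
       (simp_all add: of_nat_Suc field_simps)
  finally show ?case .
qed

lemma exp_tail_int: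
  fixes \<zeta> r :: real assumes z: "\<zeta> > 0"
  shows "(\<integral>\<^sup>+s. ennreal (\<zeta> * exp (- \<zeta> * s)) * indicator {r..} s \<partial>lborel) = ennreal (exp (- \<zeta> * r))"
proof -
  have "(\<integral>\<^sup>+s. ennreal (\<zeta> * exp (- \<zeta> * s)) * indicator {r..} s \<partial>lborel) = ennreal (0 - (- exp (- \<zeta> * r)))"
  proof (rule nn_integral_FTC_atLeast)
    show "((\<lambda>s. - exp (- \<zeta> * s)) \<longlongrightarrow> 0) at_top" using z by real_asymp
  qed (use z in \<open>auto intro!: derivative_eq_intros\<close>)
  then show ?thesis by simp
qed



lemma pow_exp_lim: "((\<lambda>v::real. v^n * exp (-v)) \<longlongrightarrow> 0) at_top"
  using tendsto_power_div_exp_0[of n] by (simp add: exp_minus divide_inverse)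

lemma outer_int:
  fixes \<zeta> t :: real and d :: nat assumes z: "\<zeta> > 0" and t: "t \<ge> 0" and d: "d \<ge> 1"
  shows "(\<integral>\<^sup>+s. ennreal (\<zeta> * exp (- \<zeta> * s) * (s^d - t^d)) * indicator {t..} s \<partial>lborel)
     = ennreal (fact d / \<zeta>^d * exp (- \<zeta> * t) * (\<Sum>n<d. (\<zeta> * t)^n / fact n))"
proof -
  define Erl where "Erl = (\<lambda>x::real. - (\<Sum>n\<le>d. (x^n * exp (-x)) / fact n))"
  define F where "F = (\<lambda>s. (fact d / \<zeta>^d) * Erl (\<zeta> * s) + exp (- \<zeta> * s) * t^d)"
  have "(\<integral>\<^sup>+s. ennreal (\<zeta> * exp (- \<zeta> * s) * (s^d - t^d)) * indicator {t..} s \<partial>lborel) = ennreal (0 - F t)"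
  proof (rule nn_integral_FTC_atLeast)
    show "(\<lambda>s. \<zeta> * exp (- \<zeta> * s) * (s^d - t^d)) \<in> borel_measurable borel" by measurable
    show "0 \<le> \<zeta> * exp (- \<zeta> * s) * (s^d - t^d)" if "t \<le> s" for s
      using z that t by (auto intro!: mult_nonneg_nonneg power_mono)
    show "DERIV F s :> \<zeta> * exp (- \<zeta> * s) * (s^d - t^d)" for s
    proof -
      have e: "DERIV Erl (\<zeta> * s) :> (\<zeta> * s)^d * exp (-(\<zeta> * s)) / fact d"
        unfolding Erl_def by (rule DERIV_Erl)
      have e2: "DERIV (\<lambda>s. Erl (\<zeta> * s)) s :> (\<zeta> * s)^d * exp (-(\<zeta> * s)) / fact d * \<zeta>"
        by (rule DERIV_chain'[of "\<lambda>s. \<zeta> * s", OF _ e]) (auto intro!: derivative_eq_intros)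
      have eq: "(fact d / \<zeta>^d) * ((\<zeta> * s)^d * exp (-(\<zeta> * s)) / fact d * \<zeta>) + (exp (- \<zeta> * s) * (- \<zeta>)) * t^d = \<zeta> * exp (- \<zeta> * s) * (s^d - t^d)"
        using z by (simp add: power_mult_distrib field_simps)
      have "DERIV F s :> (fact d / \<zeta>^d) * ((\<zeta> * s)^d * exp (-(\<zeta> * s)) / fact d * \<zeta>) + (exp (- \<zeta> * s) * (- \<zeta>)) * t^d"
        unfolding F_def using z by (auto intro!: derivative_eq_intros e2)
      then show ?thesis unfolding eq .
    qed
    show "(F \<longlongrightarrow> 0) at_top"
    proof -
      have lz: "filterlim (\<lambda>s. \<zeta> * s) at_top at_top"
        using z by (intro filterlim_tendsto_pos_mult_at_top[OF tendsto_const] filterlim_ident) auto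
      have "((\<lambda>s. Erl (\<zeta> * s)) \<longlongrightarrow> - (\<Sum>n\<le>d. 0 / fact n)) at_top"
        unfolding Erl_def
        by (intro tendsto_intros filterlim_compose[OF pow_exp_lim lz]) auto
      then have "((\<lambda>s. Erl (\<zeta> * s)) \<longlongrightarrow> 0) at_top" by simp
      moreover have "((\<lambda>s. exp (- \<zeta> * s) * t^d) \<longlongrightarrow> 0) at_top" using z by real_asymp
      ultimately have "(F \<longlongrightarrow> (fact d / \<zeta>^d) * 0 + 0) at_top"
        unfolding F_def by (intro tendsto_intros)
      then show ?thesis by simp
    qed
  qed
  also have "0 - F t = fact d / \<zeta>^d * exp (- \<zeta> * t) * (\<Sum>n<d. (\<zeta> * t)^n / fact n)"
  proof -
    have "(\<Sum>n\<le>d. ((\<zeta> * t)^n * exp (-(\<zeta> * t))) / fact n) = exp (- \<zeta> * t) * (\<Sum>n<d. (\<zeta> * t)^n / fact n) + (\<zeta> * t)^d * exp (- \<zeta> * t) / fact d"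
      by (simp add: lessThan_Suc_atMost[symmetric] sum_distrib_left algebra_simps)
    then show ?thesis
      using z unfolding F_def Erl_def by (simp add: power_mult_distrib field_simps)
  qed
  finally show ?thesis .
qed



lemma tail_nn:
  fixes \<zeta> t :: real assumes z: "\<zeta> > 0" and t: "t \<ge> 0"
  shows "(\<integral>\<^sup>+z. ennreal (exp (- \<zeta> * norm z)) * indicator {z::'a::euclidean_space. t < norm z} z \<partial>lborel)
     = ennreal (unit_ball_vol (real DIM('a)) * (fact DIM('a) / \<zeta>^DIM('a) * exp (- \<zeta> * t) * (\<Sum>n<DIM('a). (\<zeta> * t)^n / fact n)))"
proof -
  define d where "d = DIM('a)"
  define W where "W = unit_ball_vol (real d)"
  have W: "W > 0" unfolding W_def by simp
  have d: "d \<ge> 1" unfolding d_def by (simp add: DIM_positive Suc_leI)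
  have "(\<integral>\<^sup>+z. ennreal (exp (- \<zeta> * norm z)) * indicator {z::'a. t < norm z} z \<partial>lborel)
     = (\<integral>\<^sup>+z. (\<integral>\<^sup>+s. ennreal (\<zeta> * exp (- \<zeta> * s)) * indicator {norm z..} s * indicator {z::'a. t < norm z} z \<partial>lborel) \<partial>lborel)"
    by (intro nn_integral_cong, subst nn_integral_multc, simp, subst exp_tail_int[OF z], simp)
  also have "\<dots> = (\<integral>\<^sup>+s. (\<integral>\<^sup>+z. ennreal (\<zeta> * exp (- \<zeta> * s)) * indicator {norm z..} s * indicator {z::'a. t < norm z} z \<partial>lborel) \<partial>lborel)"
  proof (rule lborel_pair.Fubini'[symmetric])
    have m: "(\<lambda>(z::'a, s::real). ennreal (\<zeta> * exp (- \<zeta> * s)) * indicator {norm z..} s * indicator {z::'a. t < norm z} z)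
      = (\<lambda>p. ennreal (\<zeta> * exp (- \<zeta> * snd p)) * indicator {p. norm (fst p) \<le> snd p} p * indicator {p. t < norm (fst p)} p)"
      by (auto simp: fun_eq_iff split: split_indicator)
    show "(\<lambda>(z::'a, s::real). ennreal (\<zeta> * exp (- \<zeta> * s)) * indicator {norm z..} s * indicator {z::'a. t < norm z} z) \<in> borel_measurable (lborel \<Otimes>\<^sub>M lborel)"
      unfolding m by measurable
  qed
  also have "\<dots> = (\<integral>\<^sup>+s. ennreal W * (ennreal (\<zeta> * exp (- \<zeta> * s) * (s^d - t^d)) * indicator {t..} s) \<partial>lborel)"
  proof (intro nn_integral_cong)
    fix s :: real
    have "(\<integral>\<^sup>+z. ennreal (\<zeta> * exp (- \<zeta> * s)) * indicator {norm z..} s * indicator {z::'a. t < norm z} z \<partial>lborel)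
       = (\<integral>\<^sup>+z. ennreal (\<zeta> * exp (- \<zeta> * s)) * indicator (cball 0 s - cball (0::'a) t) z \<partial>lborel)"
      by (intro nn_integral_cong) (auto split: split_indicator)
    also have "\<dots> = ennreal (\<zeta> * exp (- \<zeta> * s)) * emeasure lborel (cball 0 s - cball (0::'a) t)"
      by (rule nn_integral_cmult_indicator) simp
    also have "emeasure lborel (cball 0 s - cball (0::'a) t) = ennreal (W * (s^d - t^d)) * indicator {t..} s"
    proof (cases "t \<le> s")
      case True
      have "emeasure lborel (cball 0 s - cball (0::'a) t) = emeasure lborel (cball (0::'a) s) - emeasure lborel (cball (0::'a) t)"
        using True by (intro emeasure_Diff) (auto simp: emeasure_cball t)
      also have "\<dots> = ennreal (W * s^d) - ennreal (W * t^d)"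
        using True t by (simp add: emeasure_cball W_def d_def)
      also have "\<dots> = ennreal (W * (s^d - t^d))"
        using True t W by (subst ennreal_minus) (auto simp: algebra_simps intro!: mult_left_mono power_mono)
      finally show ?thesis using True by simp
    next
      case False
      then have e: "cball 0 s - cball (0::'a) t = {}" by auto
      have "indicator {t..} s = (0::ennreal)" using False by simp
      then show ?thesis unfolding e by simp
    qed
    finally show "(\<integral>\<^sup>+z. ennreal (\<zeta> * exp (- \<zeta> * s)) * indicator {norm z..} s * indicator {z::'a. t < norm z} z \<partial>lborel)
       = ennreal W * (ennreal (\<zeta> * exp (- \<zeta> * s) * (s^d - t^d)) * indicator {t..} s)"
      using W z by (simp add: ennreal_mult' mult_ac)
  qed
  also have "\<dots> = ennreal W * ennreal (fact d / \<zeta>^d * exp (- \<zeta> * t) * (\<Sum>n<d. (\<zeta> * t)^n / fact n))"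
    by (subst nn_integral_cmult, simp, subst outer_int[OF z t d], simp)
  also have "\<dots> = ennreal (W * (fact d / \<zeta>^d * exp (- \<zeta> * t) * (\<Sum>n<d. (\<zeta> * t)^n / fact n)))"
    using W by (subst ennreal_mult') auto
  finally show ?thesis unfolding W_def d_def .
qed



lemma laplace_facts:
  fixes \<zeta> t :: real assumes z: "\<zeta> > 0" and t: "t \<ge> 0"
  shows "prob_space (norm_laplace \<zeta> :: 'a::euclidean_space measure)"
    and "measure (norm_laplace \<zeta> :: 'a measure) {z. t < norm z}
           = exp (- \<zeta> * t) * (\<Sum>n<DIM('a). (\<zeta> * t)^n / fact n)"
proof -
  define C where "C = (\<lambda>t. unit_ball_vol (real DIM('a)) * (fact DIM('a) / \<zeta>^DIM('a) * exp (- \<zeta> * t) * (\<Sum>n<DIM('a). (\<zeta> * t)^n / fact n)))"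
  define C0 where "C0 = unit_ball_vol (real DIM('a)) * (fact DIM('a) / \<zeta>^DIM('a))"
  have C0: "C0 > 0" unfolding C0_def using z by simp
  have "(\<Sum>n<DIM('a). (\<zeta> * 0)^n / fact n) = (1::real)"
  proof -
    obtain m where "DIM('a) = Suc m" using DIM_positive[where 'a='a] by (metis Suc_pred)
    then show ?thesis by (simp add: sum.lessThan_Suc_shift del: sum.lessThan_Suc)
  qed
  then have C00: "C 0 = C0" unfolding C_def C0_def by simp
  have I0: "(\<integral>\<^sup>+z. ennreal (exp (- \<zeta> * norm z)) \<partial>(lborel::'a measure)) = ennreal C0"
  proof -
    have "(\<integral>\<^sup>+z. ennreal (exp (- \<zeta> * norm z)) \<partial>(lborel::'a measure))
        = (\<integral>\<^sup>+z. ennreal (exp (- \<zeta> * norm z)) * indicator {z::'a. 0 < norm z} z \<partial>lborel)"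
      by (intro nn_integral_cong_AE eventually_mono[OF AE_lborel_singleton[of 0]]) auto
    also have "\<dots> = ennreal (C 0)" unfolding C_def by (rule tail_nn[OF z order.refl])
    finally show ?thesis using C00 by simp
  qed
  have int: "(\<integral>z. exp (- \<zeta> * norm z) \<partial>(lborel::'a measure)) = C0"
  proof -
    have "has_bochner_integral (lborel::'a measure) (\<lambda>z. exp (- \<zeta> * norm z)) C0"
      using I0 C0 by (intro has_bochner_integral_nn_integral) auto
    then show ?thesis by (simp add: has_bochner_integral_iff)
  qed
  have em: "emeasure (norm_laplace \<zeta> :: 'a measure) A
      = (\<integral>\<^sup>+z. ennreal (exp (- \<zeta> * norm z)) * indicator A z \<partial>lborel) * ennreal (1 / C0)"
    if A: "A \<in> sets borel" for A :: "'a set"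
  proof -
    have "emeasure (norm_laplace \<zeta> :: 'a measure) A = (\<integral>\<^sup>+z. ennreal (exp (- \<zeta> * norm z) / C0) * indicator A z \<partial>lborel)"
      unfolding norm_laplace_def int using A by (subst emeasure_density) auto
    also have "\<dots> = (\<integral>\<^sup>+z. ennreal (exp (- \<zeta> * norm z)) * indicator A z * ennreal (1 / C0) \<partial>lborel)"
      using C0 by (intro nn_integral_cong) (simp add: ennreal_mult' divide_inverse mult_ac)
    also have "\<dots> = (\<integral>\<^sup>+z. ennreal (exp (- \<zeta> * norm z)) * indicator A z \<partial>lborel) * ennreal (1 / C0)"
      using A by (intro nn_integral_multc borel_measurable_times_ennreal borel_measurable_indicator) auto
    finally show ?thesis .
  qed
  have "emeasure (norm_laplace \<zeta> :: 'a measure) UNIV = ennreal C0 * ennreal (1 / C0)"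
    using em[of UNIV] I0 by simp
  also have "\<dots> = 1" using C0 by (simp add: ennreal_mult'[symmetric])
  finally have U: "emeasure (norm_laplace \<zeta> :: 'a measure) UNIV = 1" .
  show P: "prob_space (norm_laplace \<zeta> :: 'a measure)"
  proof (rule prob_spaceI)
    have "space (norm_laplace \<zeta> :: 'a measure) = UNIV" by (simp add: norm_laplace_def)
    then show "emeasure (norm_laplace \<zeta> :: 'a measure) (space (norm_laplace \<zeta>)) = 1" using U by simp
  qed
  have Ct: "C t \<ge> 0" unfolding C_def using z t by (auto intro!: mult_nonneg_nonneg sum_nonneg divide_nonneg_nonneg)
  have "emeasure (norm_laplace \<zeta> :: 'a measure) {z. t < norm z} = ennreal (C t) * ennreal (1 / C0)"
    using em[of "{z. t < norm z}"] tail_nn[OF z t, where 'a='a] unfolding C_def by simp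
  also have "\<dots> = ennreal (C t / C0)"
    using C0 Ct by (subst ennreal_mult'[symmetric]) (auto simp: divide_inverse)
  finally have "measure (norm_laplace \<zeta> :: 'a measure) {z. t < norm z} = C t / C0"
    unfolding measure_def using C0 Ct by simp
  then show "measure (norm_laplace \<zeta> :: 'a measure) {z. t < norm z}
           = exp (- \<zeta> * t) * (\<Sum>n<DIM('a). (\<zeta> * t)^n / fact n)"
    unfolding C_def C0_def using z by (simp add: less_imp_neq[OF unit_ball_vol_pos, symmetric])
qed



lemma four_pow_le: "(d::nat) \<ge> 1 \<Longrightarrow> 4^(d-1) \<le> d^d"
proof -
  assume d: "d \<ge> 1"
  show ?thesis
  proof (cases "d \<le> 3")
    case True
    then have "d = 1 \<or> d = 2 \<or> d = 3" using d by auto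
    then show ?thesis by auto
  next
    case False
    have "4^(d-1) \<le> d^(d-1)" using False by (intro power_mono) auto
    also have "\<dots> \<le> d^d" using False by (intro power_increasing) auto
    finally show ?thesis .
  qed
qed

lemma partial_exp_le: "(x::real) \<ge> 0 \<Longrightarrow> (\<Sum>n<d. x^n / fact n) \<le> exp x"
proof -
  assume x: "x \<ge> 0"
  have s: "(\<lambda>n. x^n / fact n) sums exp x"
    using exp_converges[of x] by (simp add: divide_inverse scaleR_conv_of_real mult_ac)
  have "(\<Sum>n<d. x^n / fact n) \<le> (\<Sum>n. x^n / fact n)"
    using s x by (intro sum_le_suminf) (auto simp: sums_iff)
  then show ?thesis using s by (simp add: sums_iff)
qed

lemma numeric:
  fixes \<delta> :: real and d :: nat
  assumes d: "d \<ge> 1" and del: "0 < \<delta>" "\<delta> < 1"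
  shows "exp (- ((4/3) * d * ln (d / \<delta>))) * (\<Sum>n<d. ((4/3) * d * ln (d / \<delta>))^n / fact n) \<le> \<delta>"
proof -
  define l where "l = ln (d / \<delta>)"
  define u where "u = (4/3) * d * l"
  have dd: "real d / \<delta> > 1" using d del by (simp add: field_simps)
  then have l: "l > 0" unfolding l_def by simp
  have u: "u \<ge> 0" unfolding u_def using l by simp
  have "(\<Sum>n<d. u^n / fact n) \<le> (\<Sum>n<d. 4^(d-1) * ((u/4)^n / fact n))"
  proof (intro sum_mono)
    fix n assume n: "n \<in> {..<d}"
    have "u^n = 4^n * (u/4)^n" by (simp add: power_divide)
    also have "\<dots> \<le> 4^(d-1) * (u/4)^n"
      using n u by (intro mult_right_mono power_increasing) auto
    finally show "u^n / fact n \<le> 4^(d-1) * ((u/4)^n / fact n)"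
      by (simp add: divide_right_mono)
  qed
  also have "\<dots> = 4^(d-1) * (\<Sum>n<d. (u/4)^n / fact n)" by (simp add: sum_distrib_left)
  also have "\<dots> \<le> 4^(d-1) * exp (u/4)"
    using u by (intro mult_left_mono partial_exp_le) auto
  finally have S: "(\<Sum>n<d. u^n / fact n) \<le> 4^(d-1) * exp (u/4)" .
  have "exp (- u) * (\<Sum>n<d. u^n / fact n) \<le> exp (- u) * (4^(d-1) * exp (u/4))"
    using S by (intro mult_left_mono) auto
  also have "\<dots> = 4^(d-1) * exp (real d * (- l))"
  proof -
    have "exp (- u) * exp (u/4) = exp (real d * (- l))"
      unfolding mult_exp_exp u_def by (rule arg_cong[where f=exp]) (simp add: algebra_simps)
    then show ?thesis by (simp add: mult_ac)
  qed
  also have "exp (real d * (- l)) = (\<delta> / d)^d"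
  proof -
    have "exp (- l) = \<delta> / d" unfolding l_def using del dd by (simp add: exp_minus inverse_eq_divide)
    then show ?thesis by (simp only: exp_of_nat_mult)
  qed
  also have "4^(d-1) * (\<delta> / d)^d = \<delta> * (\<delta>^(d-1) * (4^(d-1) / real d^d))"
  proof -
    obtain m where m: "d = Suc m" using d by (cases d) auto
    have "real d ^ d > 0" using d by simp
    then show ?thesis unfolding m by (simp add: power_divide)
  qed
  also have "\<dots> \<le> \<delta> * (1 * 1)"
  proof (intro mult_left_mono mult_mono)
    show "\<delta>^(d-1) \<le> 1" using del by (intro power_le_one) auto
    have "real (4^(d-1)) \<le> real (d^d)" using four_pow_le[OF d] by linarith
    then show "4^(d-1) / real d^d \<le> 1" using d by (simp add: divide_le_eq)
  qed (use del in auto)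
  finally show ?thesis unfolding u_def l_def by simp
qed



lemma smooth_bound:
  fixes CR \<rho> \<eta> \<tau> c4 :: real
    and B :: nat
    and x :: "nat \<Rightarrow> 'a::euclidean_space" and y :: "nat \<Rightarrow> real"
    and L L' :: "real \<Rightarrow> real"
    and R :: "'a \<Rightarrow> real" and gradR :: "'a \<Rightarrow> 'a" and HessR :: "'a \<Rightarrow> 'a \<Rightarrow> 'a"
    and N :: "'i set" and fp :: 'a and fi \<epsilon> :: "'i \<Rightarrow> 'a"
    and fstar \<xi> :: 'a
  assumes B: "B \<ge> 1"
    and CR: "CR > 0" and rho: "\<rho> > 0"
    and x: "\<And>j. j \<in> {1..B} \<Longrightarrow> norm (x j) \<le> 1"
    and y: "\<And>j. j \<in> {1..B} \<Longrightarrow> y j \<in> {-1, 1}"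
    and L_deriv: "\<And>a. (L has_real_derivative L' a) (at a)"
    and L'_lip: "\<And>a b. \<bar>L' a - L' b\<bar> \<le> c4 * \<bar>a - b\<bar>"
    and R_grad: "\<And>f. (R has_derivative (\<lambda>h. gradR f \<bullet> h)) (at f)"
    and R_hess: "\<And>f. (gradR has_derivative HessR f) (at f)"
    and R_hess_bound: "\<And>f. onorm (HessR f) \<le> \<tau>"
    and fstar: "\<And>f. Zprim CR B L x y \<rho> R \<eta> N fp fi \<epsilon> fstar
                     \<le> Zprim CR B L x y \<rho> R \<eta> N fp fi \<epsilon> f"
  shows "Zprim CR B L x y \<rho> R \<eta> N fp fi \<epsilon> (fstar + \<xi>)
         \<le> Zprim CR B L x y \<rho> R \<eta> N fp fi \<epsilon> fstar + (\<rho> * \<tau> + c4 * CR) / 2 * (norm \<xi>)\<^sup>2"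
proof -
  define Z where "Z = Zprim CR B L x y \<rho> R \<eta> N fp fi \<epsilon>"
  define Z' where "Z' = (\<lambda>f h. CR / real B * (\<Sum>j = 1..B. L' (y j * (f \<bullet> x j)) * (y j * (h \<bullet> x j)))
        + \<rho> * (gradR f \<bullet> h) - \<eta> * (\<Sum>i\<in>N. h \<bullet> \<epsilon> i))"
  define K where "K = \<rho> * \<tau> + c4 * CR"
  have hL: "((\<lambda>f. L (y j * (f \<bullet> x j))) has_derivative (\<lambda>h. L' (y j * (f \<bullet> x j)) * (y j * (h \<bullet> x j)))) (at f)" for j f
  proof -
    have "((\<lambda>f. L (y j * (f \<bullet> x j))) has_derivative (\<lambda>h. (y j * (h \<bullet> x j)) * L' (y j * (f \<bullet> x j)))) (at f)"
      by (rule DERIV_compose_FDERIV[OF L_deriv]) (auto intro!: derivative_eq_intros)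
    then show ?thesis by (simp add: mult_ac)
  qed
  have dZ: "(Z has_derivative Z' f) (at f)" for f
    unfolding Z_def Zprim_def Z'_def
    apply (rule has_derivative_eq_rhs)
     apply (rule derivative_eq_intros hL R_grad refl | assumption)+
    by (simp add: fun_eq_iff)
  have c4: "c4 \<ge> 0" using L'_lip[of 1 0] by simp
  have tau: "\<tau> \<ge> 0"
    using onorm_pos_le[OF has_derivative_bounded_linear[OF R_hess[of 0]]] R_hess_bound[of 0] by simp
  have Z0: "Z' fstar = (\<lambda>v. 0)"
    by (rule differential_zero_maxmin[of fstar UNIV Z]) (use dZ fstar in \<open>auto simp: Z_def\<close>)
  define D where "D = (\<lambda>s::real. Z' (fstar + s *\<^sub>R \<xi>) \<xi>)"
  have dG: "DERIV (\<lambda>s. Z (fstar + s *\<^sub>R \<xi>)) s :> D s" for s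
  proof -
    have "((\<lambda>s. Z (fstar + s *\<^sub>R \<xi>)) has_derivative (\<lambda>h. Z' (fstar + s *\<^sub>R \<xi>) (h *\<^sub>R \<xi>))) (at s)"
      by (rule has_derivative_compose[OF _ dZ]) (auto intro!: derivative_eq_intros)
    moreover have "(\<lambda>h. Z' (fstar + s *\<^sub>R \<xi>) (h *\<^sub>R \<xi>)) = (\<lambda>h. D s * h)"
    proof -
      have "linear (Z' (fstar + s *\<^sub>R \<xi>))" using dZ by (rule has_derivative_linear)
      then show ?thesis by (simp add: fun_eq_iff D_def linear_scale)
    qed
    ultimately show ?thesis by (simp add: has_field_derivative_def)
  qed
  have Dbound: "D s \<le> K * s * (norm \<xi>)\<^sup>2" if s: "s \<ge> 0" for s
  proof -
    have "D 0 = 0" unfolding D_def using Z0 by simp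
    have eq: "D s = D s - D 0" using \<open>D 0 = 0\<close> by simp
    also have "\<dots> = CR / real B * (\<Sum>j = 1..B. (L' (y j * ((fstar + s *\<^sub>R \<xi>) \<bullet> x j)) - L' (y j * (fstar \<bullet> x j))) * (y j * (\<xi> \<bullet> x j)))
        + \<rho> * ((gradR (fstar + s *\<^sub>R \<xi>) - gradR fstar) \<bullet> \<xi>)"
      unfolding D_def Z'_def by (simp add: algebra_simps sum_subtractf inner_diff_left)
    also have "\<dots> \<le> CR / real B * (\<Sum>j = 1..B. c4 * s * (norm \<xi>)\<^sup>2) + \<rho> * (\<tau> * s * (norm \<xi>)\<^sup>2)"
    proof (intro add_mono mult_left_mono sum_mono)
      fix j assume j: "j \<in> {1..B}"
      have yj: "\<bar>y j\<bar> = 1" using y[OF j] by auto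
      have xi: "\<bar>\<xi> \<bullet> x j\<bar> \<le> norm \<xi>"
        using Cauchy_Schwarz_ineq2[of \<xi> "x j"] x[OF j] norm_ge_zero[of \<xi>]
        by (meson mult_left_le order_trans)
      have "(L' (y j * ((fstar + s *\<^sub>R \<xi>) \<bullet> x j)) - L' (y j * (fstar \<bullet> x j))) * (y j * (\<xi> \<bullet> x j))
          \<le> \<bar>L' (y j * ((fstar + s *\<^sub>R \<xi>) \<bullet> x j)) - L' (y j * (fstar \<bullet> x j))\<bar> * \<bar>y j * (\<xi> \<bullet> x j)\<bar>"
        by (metis abs_ge_self abs_mult)
      also have "\<dots> \<le> (c4 * \<bar>y j * ((fstar + s *\<^sub>R \<xi>) \<bullet> x j) - y j * (fstar \<bullet> x j)\<bar>) * \<bar>y j * (\<xi> \<bullet> x j)\<bar>"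
        by (intro mult_right_mono L'_lip) auto
      also have "\<dots> = c4 * s * (\<bar>\<xi> \<bullet> x j\<bar> * \<bar>\<xi> \<bullet> x j\<bar>)"
        using yj s by (simp add: inner_add_left algebra_simps abs_mult)
      also have "\<dots> \<le> c4 * s * (norm \<xi> * norm \<xi>)"
        using c4 s xi by (intro mult_left_mono mult_mono) auto
      finally show "(L' (y j * ((fstar + s *\<^sub>R \<xi>) \<bullet> x j)) - L' (y j * (fstar \<bullet> x j))) * (y j * (\<xi> \<bullet> x j))
          \<le> c4 * s * (norm \<xi>)\<^sup>2" by (simp add: power2_eq_square)
    next
      have "(gradR (fstar + s *\<^sub>R \<xi>) - gradR fstar) \<bullet> \<xi> \<le> norm (gradR (fstar + s *\<^sub>R \<xi>) - gradR fstar) * norm \<xi>"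
        by (rule order_trans[OF abs_ge_self Cauchy_Schwarz_ineq2])
      also have "\<dots> \<le> (\<tau> * norm ((fstar + s *\<^sub>R \<xi>) - fstar)) * norm \<xi>"
        by (intro mult_right_mono differentiable_bound[of UNIV gradR HessR]) (auto intro: R_hess R_hess_bound)
      also have "\<dots> = \<tau> * s * (norm \<xi>)\<^sup>2" using s by (simp add: power2_eq_square)
      finally show "(gradR (fstar + s *\<^sub>R \<xi>) - gradR fstar) \<bullet> \<xi> \<le> \<tau> * s * (norm \<xi>)\<^sup>2" .
    qed (use CR rho in auto)
    also have "\<dots> = K * s * (norm \<xi>)\<^sup>2" using B unfolding K_def by (simp add: field_simps)
    finally show ?thesis .
  qed
  define g where "g = (\<lambda>s. Z (fstar + s *\<^sub>R \<xi>) - K / 2 * s^2 * (norm \<xi>)\<^sup>2)"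
  have "g 1 \<le> g 0"
  proof (rule DERIV_nonpos_imp_nonincreasing[of 0 1 g])
    fix s :: real assume s: "0 \<le> s" "s \<le> 1"
    have "DERIV g s :> D s - K / 2 * (2 * s) * (norm \<xi>)\<^sup>2"
      unfolding g_def by (auto intro!: derivative_eq_intros dG)
    moreover have "D s - K / 2 * (2 * s) * (norm \<xi>)\<^sup>2 \<le> 0" using Dbound[OF s(1)] by simp
    ultimately show "\<exists>v. DERIV g s :> v \<and> v \<le> 0" by blast
  qed simp
  then show ?thesis unfolding g_def Z_def K_def by simp
qed



theorem lemma12:
  fixes CR \<rho> \<eta> \<tau> c4 \<alpha> \<delta> :: real
    and B :: nat
    and x :: "nat \<Rightarrow> 'a::euclidean_space" and y :: "nat \<Rightarrow> real"
    and L L' :: "real \<Rightarrow> real"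
    and R :: "'a \<Rightarrow> real" and gradR :: "'a \<Rightarrow> 'a" and HessR :: "'a \<Rightarrow> 'a \<Rightarrow> 'a"
    and N :: "'i set" and fp :: 'a and fi \<epsilon> :: "'i \<Rightarrow> 'a"
    and fstar :: 'a
  assumes B: "B \<ge> 1"
    and CR: "CR > 0" and rho: "\<rho> > 0" and eta: "\<eta> > 0"
    and N: "finite N"
    and x: "\<And>j. j \<in> {1..B} \<Longrightarrow> norm (x j) \<le> 1"
    and y: "\<And>j. j \<in> {1..B} \<Longrightarrow> y j \<in> {-1, 1}"
    and L_convex: "convex_on UNIV L"
    and L_deriv: "\<And>a. (L has_real_derivative L' a) (at a)"
    and L'_bound: "\<And>a. \<bar>L' a\<bar> \<le> 1"
    and L'_cont: "continuous_on UNIV L'"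
    and L'_lip: "\<And>a b. \<bar>L' a - L' b\<bar> \<le> c4 * \<bar>a - b\<bar>"
    and R_sc: "strongly_convex 1 R"
    and R_grad: "\<And>f. (R has_derivative (\<lambda>h. gradR f \<bullet> h)) (at f)"
    and R_hess: "\<And>f. (gradR has_derivative HessR f) (at f)"
    and R_hess_bound: "\<And>f. onorm (HessR f) \<le> \<tau>"
    and fstar: "\<And>f. Zprim CR B L x y \<rho> R \<eta> N fp fi \<epsilon> fstar
                     \<le> Zprim CR B L x y \<rho> R \<eta> N fp fi \<epsilon> f"
    and alpha: "\<alpha> > 0"
    and delta: "0 < \<delta>" "\<delta> < 1"
  shows "measure (norm_laplace (\<rho> * real B * \<alpha> / (2 * CR)))
           {\<xi>. Zprim CR B L x y \<rho> R \<eta> N fp fi \<epsilon> (fstar + \<xi>)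
                \<le> Zprim CR B L x y \<rho> R \<eta> N fp fi \<epsilon> fstar
                  + 4 * CR\<^sup>2 * (real DIM('a))\<^sup>2 * (\<rho> * \<tau> + c4 * CR)
                    * (ln (real DIM('a) / \<delta>))\<^sup>2 / (\<rho>\<^sup>2 * (real B)\<^sup>2 * \<alpha>\<^sup>2)}
         \<ge> 1 - \<delta>"
proof -
  define \<zeta> where "\<zeta> = \<rho> * real B * \<alpha> / (2 * CR)"
  define d where "d = DIM('a)"
  define l where "l = ln (real d / \<delta>)"
  define T where "T = (4/3) * d * l / \<zeta>"
  define K where "K = \<rho> * \<tau> + c4 * CR"
  define h where "h = (\<lambda>\<xi>. Zprim CR B L x y \<rho> R \<eta> N fp fi \<epsilon> (fstar + \<xi>))"
  define c where "c = Zprim CR B L x y \<rho> R \<eta> N fp fi \<epsilon> fstar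
                  + 4 * CR\<^sup>2 * (real DIM('a))\<^sup>2 * (\<rho> * \<tau> + c4 * CR)
                    * (ln (real DIM('a) / \<delta>))\<^sup>2 / (\<rho>\<^sup>2 * (real B)\<^sup>2 * \<alpha>\<^sup>2)"
  have z: "\<zeta> > 0" unfolding \<zeta>_def using rho CR alpha B by simp
  have d: "d \<ge> 1" unfolding d_def by (simp add: DIM_positive Suc_leI)
  have dd: "real d / \<delta> > 1" using d delta by (simp add: field_simps)
  then have l: "l > 0" unfolding l_def by simp
  have T: "T \<ge> 0" unfolding T_def using l z by simp
  have c4: "c4 \<ge> 0" using L'_lip[of 1 0] by simp
  have tau: "\<tau> \<ge> 0"
    using onorm_pos_le[OF has_derivative_bounded_linear[OF R_hess[of 0]]] R_hess_bound[of 0] by simp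
  have K: "K \<ge> 0" unfolding K_def using tau c4 rho CR by simp
  interpret P: prob_space "norm_laplace \<zeta> :: 'a measure" by (rule laplace_facts(1)[OF z T])
  have sets: "sets (norm_laplace \<zeta> :: 'a measure) = sets borel" by (simp add: norm_laplace_def)
  have Lc: "continuous_on UNIV L"
    using L_deriv by (intro continuous_at_imp_continuous_on) (auto intro: DERIV_isCont)
  have Rc: "continuous_on UNIV R"
    using R_grad by (intro continuous_at_imp_continuous_on) (auto intro: has_derivative_continuous)
  have hc: "continuous_on UNIV h"
    unfolding h_def Zprim_def
    using B by (auto intro!: continuous_intros continuous_on_compose2[OF Lc] continuous_on_compose2[OF Rc])
  have hm[measurable]: "h \<in> borel_measurable borel" by (rule borel_measurable_continuous_onI[OF hc])
  have Gs: "{\<xi>. h \<xi> \<le> c} \<in> P.events" unfolding sets by measurable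
  have sub: "{\<xi>::'a. norm \<xi> \<le> T} \<subseteq> {\<xi>. h \<xi> \<le> c}"
  proof
    fix \<xi> :: 'a assume "\<xi> \<in> {\<xi>. norm \<xi> \<le> T}"
    then have n: "norm \<xi> \<le> T" by simp
    have "h \<xi> \<le> Zprim CR B L x y \<rho> R \<eta> N fp fi \<epsilon> fstar + K / 2 * (norm \<xi>)\<^sup>2"
      unfolding h_def K_def
      by (rule smooth_bound[OF B CR rho x y L_deriv L'_lip R_grad R_hess R_hess_bound fstar])
    also have "\<dots> \<le> Zprim CR B L x y \<rho> R \<eta> N fp fi \<epsilon> fstar + K / 2 * T\<^sup>2"
      using n K by (intro add_left_mono mult_left_mono power_mono) auto
    also have "K / 2 * T\<^sup>2 = (8/9) * (K * d^2 * l^2 / \<zeta>^2)"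
      unfolding T_def by (simp add: power2_eq_square field_simps)
    also have "\<dots> \<le> K * d^2 * l^2 / \<zeta>^2"
      using K z by (intro mult_left_le_one_le) auto
    also have "K * d^2 * l^2 / \<zeta>^2 = 4 * CR\<^sup>2 * (real DIM('a))\<^sup>2 * (\<rho> * \<tau> + c4 * CR)
                    * (ln (real DIM('a) / \<delta>))\<^sup>2 / (\<rho>\<^sup>2 * (real B)\<^sup>2 * \<alpha>\<^sup>2)"
      unfolding K_def d_def l_def \<zeta>_def using CR by (simp add: power2_eq_square field_simps)
    finally show "\<xi> \<in> {\<xi>. h \<xi> \<le> c}" unfolding c_def by simp
  qed
  have "{\<xi>::'a. norm \<xi> \<le> T} = UNIV - {\<xi>. T < norm \<xi>}" by auto
  then have A: "P.prob {\<xi>::'a. norm \<xi> \<le> T} = 1 - P.prob {\<xi>. T < norm \<xi>}"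
    using P.prob_compl[of "{\<xi>. T < norm \<xi>}"] unfolding sets by (simp add: norm_laplace_def)
  have Bd: "P.prob {\<xi>::'a. T < norm \<xi>} \<le> \<delta>"
  proof -
    have eqT: "\<zeta> * T = (4/3) * d * ln (d / \<delta>)" unfolding T_def l_def using z by simp
    have "P.prob {\<xi>::'a. T < norm \<xi>} = exp (- \<zeta> * T) * (\<Sum>n<d. (\<zeta> * T)^n / fact n)"
      unfolding d_def by (rule laplace_facts(2)[OF z T])
    also have "\<dots> = exp (- ((4/3) * d * ln (d / \<delta>))) * (\<Sum>n<d. ((4/3) * d * ln (d / \<delta>))^n / fact n)"
      by (simp add: eqT)
    also have "\<dots> \<le> \<delta>" by (rule numeric[OF d delta])
    finally show ?thesis .
  qed
  have "P.prob {\<xi>::'a. norm \<xi> \<le> T} \<ge> 1 - \<delta>" using A Bd by linarith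
  also have "P.prob {\<xi>::'a. norm \<xi> \<le> T} \<le> P.prob {\<xi>. h \<xi> \<le> c}"
    by (rule P.finite_measure_mono[OF sub Gs])
  finally show ?thesis unfolding h_def c_def \<zeta>_def .
qed

end
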